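(* Consider Method 1.4 (described in the context) and suppose it does not terminate and the generated sequence $\{x_k\}_{k\in K}$ is bounded. Then every limit point of $\{x_k\}_{k\in K}$ belongs to $X^*$.
   Context: Setting: $f_j$, $j\in J=\{1,\dots,m\}$, convex on $\mathbb{R}^n$ with $D_j=\{x:f_j(x)\le0\}$ having nonempty interior; $D=\{x:f_j(x)\le0\ \forall j\}$; $f$ continuous, attaining its minimum on $D$. Notation: $K=\{0,1,\dots\}$, $f^*=\min_Df$, $X^*=\{x\in D: f(x)=f^*\}$, $W^1(x,D_j)=\{a:\|a\|=1,\ \langle a,z-x\rangle\le0\ \forall z\in D_j\}$. Method 1.4: choose a closed convex $M_0\subset\mathbb{R}^n$ containing at least one point of $X^*$, points $y^j\in\operatorname{int}D_j$, a constant $q\ge1$, and a point $x_0\in M_0$ with $f(x_0)\le f^*$. Given $x_k$: Step 1: if $x_k\in D$, stop. Step 2: $J_k=\{j:x_k\notin D_j\}$. Step 3: for $j\in J_k$ choose $z_k^j$ in the open segment $(y^j,x_k)$ with $z_k^j\notin\operatorname{int}D_j$ and $x_k+q_k^j(z_k^j-x_k)\in D_j$ for some $q_k^j\in[1,q]$. Step 4: for $j\in J_k$ choose a nonempty finite $A_k^j\subset W^1(z_k^j,D_j)$, set $M_k^j=M_k\cap\{x:\langle a,x-z_k^j\rangle\le0\ \forall a\in A_k^j\}$ and choose $u_k^j\in M_k^j$ with $f(u_k^j)\le f^*$. Step 5: find $j_k\in J_k$ with $\|x_k-z_k^{j_k}\|=\max_{j\in J_k}\|x_k-z_k^j\|$.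 Step 6: $J_k'=\{j\in J_k: u_k^j\in M_k^{j_k}\}$; find $l_k\in J_k'$ with $f(u_k^{l_k})=\max_{j\in J_k'}f(u_k^j)$. Step 7: $M_{k+1}=M_k^{j_k}\cap\{x:\langle a,x-z_k^{l_k}\rangle\le0\ \forall a\in A_k^{l_k}\}$, $x_{k+1}=u_k^{l_k}$. *)

theory Defs
  imports "HOL-Analysis.Analysis"
begin

definition Dj :: "(nat \<Rightarrow> 'a \<Rightarrow> real) \<Rightarrow> nat \<Rightarrow> 'a set" where
  "Dj fs j = {x. fs j x \<le> 0}"

definition Dset :: "nat \<Rightarrow> (nat \<Rightarrow> 'a \<Rightarrow> real) \<Rightarrow> 'a set" where
  "Dset m fs = {x. \<forall>j\<in>{1..m}. fs j x \<le> 0}"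

text \<open>f* = min over D of f (the minimum is assumed to be attained).\<close>
definition fstar :: "nat \<Rightarrow> (nat \<Rightarrow> 'a \<Rightarrow> real) \<Rightarrow> ('a \<Rightarrow> real) \<Rightarrow> real" where
  "fstar m fs f = Inf (f ` Dset m fs)"

definition Xstar :: "nat \<Rightarrow> (nat \<Rightarrow> 'a \<Rightarrow> real) \<Rightarrow> ('a \<Rightarrow> real) \<Rightarrow> 'a set" where
  "Xstar m fs f = {x \<in> Dset m fs. f x = fstar m fs f}"

definition W1 :: "'a::real_inner \<Rightarrow> 'a set \<Rightarrow> 'a set" where
  "W1 x S = {a. norm a = 1 \<and> (\<forall>z\<in>S. inner a (z - x) \<le> 0)}"

definition cut :: "'a::real_inner set \<Rightarrow> 'a \<Rightarrow> 'a set" where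
  "cut A z = {x. \<forall>a\<in>A. inner a (x - z) \<le> 0}"

text \<open>A non-terminating run of Method 1.4, with all choices made explicit:
  M k = M_k, x k = x_k, z k j = z_k^j, A k j = A_k^j, u k j = u_k^j,
  jk k = j_k, lk k = l_k.  J_k = {j in J. x_k not in D_j}.\<close>
definition method14_run ::
  "nat \<Rightarrow> (nat \<Rightarrow> 'a::euclidean_space \<Rightarrow> real) \<Rightarrow> ('a \<Rightarrow> real) \<Rightarrow> (nat \<Rightarrow> 'a) \<Rightarrow> real
   \<Rightarrow> (nat \<Rightarrow> 'a set) \<Rightarrow> (nat \<Rightarrow> 'a) \<Rightarrow> (nat \<Rightarrow> nat \<Rightarrow> 'a) \<Rightarrow> (nat \<Rightarrow> nat \<Rightarrow> 'a set)
   \<Rightarrow> (nat \<Rightarrow> nat \<Rightarrow> 'a) \<Rightarrow> (nat \<Rightarrow> nat) \<Rightarrow> (nat \<Rightarrow> nat) \<Rightarrow> bool" where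
  "method14_run m fs f y q M x z A u jk lk \<longleftrightarrow>
     closed (M 0) \<and> convex (M 0) \<and> M 0 \<inter> Xstar m fs f \<noteq> {} \<and>
     (\<forall>j\<in>{1..m}. y j \<in> interior (Dj fs j)) \<and> q \<ge> 1 \<and>
     x 0 \<in> M 0 \<and> f (x 0) \<le> fstar m fs f \<and>
     (\<forall>k. x k \<notin> Dset m fs \<and>
        (let Jk = {j\<in>{1..m}. x k \<notin> Dj fs j};
             Mk = (\<lambda>j. M k \<inter> cut (A k j) (z k j));
             Jk' = {j\<in>Jk. u k j \<in> Mk (jk k)}
         in (\<forall>j\<in>Jk.
               z k j \<in> open_segment (y j) (x k) \<and> z k j \<notin> interior (Dj fs j) \<and>
               (\<exists>qkj. 1 \<le> qkj \<and> qkj \<le> q \<and> x k + qkj *\<^sub>R (z k j - x k) \<in> Dj fs j) \<and>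
               finite (A k j) \<and> A k j \<noteq> {} \<and> A k j \<subseteq> W1 (z k j) (Dj fs j) \<and>
               u k j \<in> Mk j \<and> f (u k j) \<le> fstar m fs f) \<and>
            jk k \<in> Jk \<and> (\<forall>j\<in>Jk. norm (x k - z k j) \<le> norm (x k - z k (jk k))) \<and>
            lk k \<in> Jk' \<and> (\<forall>j\<in>Jk'. f (u k j) \<le> f (u k (lk k))) \<and>
            M (Suc k) = Mk (jk k) \<inter> cut (A k (lk k)) (z k (lk k)) \<and>
            x (Suc k) = u k (lk k)))"

end

theory Submission
  imports Defs
begin

lemma key_ineq:
  fixes a xk xk' z yj :: "'a::real_inner"
  assumes seg: "z \<in> open_segment yj xk" and na: "norm a = 1"
    and W: "\<forall>w\<in>S. inner a (w - z) \<le> 0" and cb: "cball yj c \<subseteq> S" and c: "c > 0"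
    and nB: "norm (xk - yj) \<le> B" and B: "B > 0" and cut: "inner a (xk' - z) \<le> 0"
  shows "c / B * norm (xk - z) \<le> norm (xk' - xk)"
proof -
  obtain s where s: "0 < s" "s < 1" and zs: "z = (1 - s) *\<^sub>R yj + s *\<^sub>R xk"
    using seg by (auto simp: in_segment)
  have aa: "inner a a = 1" using na by (simp add: dot_square_norm)
  have "yj + c *\<^sub>R a \<in> S" using cb c na by (auto simp: dist_norm)
  then have "inner a (yj + c *\<^sub>R a - z) \<le> 0" using W by blast
  also have "yj + c *\<^sub>R a - z = c *\<^sub>R a - s *\<^sub>R (xk - yj)" by (simp add: zs algebra_simps)
  finally have h1: "c \<le> s * inner a (xk - yj)" using aa by (simp add: inner_diff_right)
  have ip: "inner a (xk - yj) \<ge> 0" using h1 c s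
    mult_pos_neg[of s "inner a (xk - yj)"] by linarith
  have h2: "c \<le> inner a (xk - yj)" using h1 ip s
    using mult_left_le_one_le[of "inner a (xk - yj)" s] by linarith
  have xz: "xk - z = (1 - s) *\<^sub>R (xk - yj)" by (simp add: zs algebra_simps)
  have nxz: "norm (xk - z) = (1 - s) * norm (xk - yj)" using s by (simp add: xz)
  have "c / B * norm (xk - z) \<le> c / B * ((1 - s) * B)"
  proof -
    have "(1 - s) * norm (xk - yj) \<le> (1 - s) * B" using nB s by (intro mult_left_mono) auto
    then show ?thesis using nxz c B by (intro mult_left_mono) auto
  qed
  also have "\<dots> = (1 - s) * c" using B by simp
  also have "\<dots> \<le> (1 - s) * inner a (xk - yj)" using h2 s by (intro mult_left_mono) auto
  also have "\<dots> = inner a (xk - z)" by (simp add: xz)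
  also have "\<dots> \<le> inner a (xk - z) - inner a (xk' - z)" using cut by simp
  also have "\<dots> = inner a (xk - xk')" by (simp add: inner_diff_right)
  also have "\<dots> \<le> norm a * norm (xk - xk')" by (rule norm_cauchy_schwarz)
  also have "\<dots> = norm (xk' - xk)" using na by (simp add: norm_minus_commute)
  finally show ?thesis .
qed

theorem theorem1p4p1:
  fixes m :: nat and fs :: "nat \<Rightarrow> 'a::euclidean_space \<Rightarrow> real" and f :: "'a \<Rightarrow> real"
    and y :: "nat \<Rightarrow> 'a" and q :: real and M :: "nat \<Rightarrow> 'a set" and x :: "nat \<Rightarrow> 'a"
    and z :: "nat \<Rightarrow> nat \<Rightarrow> 'a" and A :: "nat \<Rightarrow> nat \<Rightarrow> 'a set" and u :: "nat \<Rightarrow> nat \<Rightarrow> 'a"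
    and jk lk :: "nat \<Rightarrow> nat"
  assumes convex_fs: "\<And>j. j \<in> {1..m} \<Longrightarrow> convex_on UNIV (fs j)"
    and int_Dj: "\<And>j. j \<in> {1..m} \<Longrightarrow> interior (Dj fs j) \<noteq> {}"
    and cont_f: "continuous_on UNIV f"
    and attains: "\<exists>x0\<in>Dset m fs. \<forall>x\<in>Dset m fs. f x0 \<le> f x"
    and run: "method14_run m fs f y q M x z A u jk lk"
    and bdd: "bounded (range x)"
  shows "\<forall>p. (\<exists>r. strict_mono r \<and> (x \<circ> r) \<longlonglongrightarrow> p) \<longrightarrow> p \<in> Xstar m fs f"
proof (intro allI impI)
  fix p assume "\<exists>r. strict_mono r \<and> (x \<circ> r) \<longlonglongrightarrow> p"
  then obtain r where r: "strict_mono r" and lim: "(\<lambda>i. x (r i)) \<longlonglongrightarrow> p"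
    by (auto simp: o_def)
  define J where "J = (\<lambda>k. {j\<in>{1..m}. x k \<notin> Dj fs j})"
  define fs0 where "fs0 = fstar m fs f"
  have jkJ: "\<And>k. jk k \<in> J k" using run unfolding method14_run_def Let_def J_def by blast
  have zs: "\<And>k j. j \<in> J k \<Longrightarrow> z k j \<in> open_segment (y j) (x k) \<and> A k j \<noteq> {} \<and>
       A k j \<subseteq> W1 (z k j) (Dj fs j) \<and>
       (\<exists>qkj. 1 \<le> qkj \<and> qkj \<le> q \<and> x k + qkj *\<^sub>R (z k j - x k) \<in> Dj fs j) \<and>
       f (u k j) \<le> fs0 \<and> u k j \<in> M k \<inter> cut (A k j) (z k j)"
  proof -
    fix k j assume "j \<in> J k"
    have "\<forall>j\<in>J k. z k j \<in> open_segment (y j) (x k) \<and> z k j \<notin> interior (Dj fs j) \<and>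
               (\<exists>qkj. 1 \<le> qkj \<and> qkj \<le> q \<and> x k + qkj *\<^sub>R (z k j - x k) \<in> Dj fs j) \<and>
               finite (A k j) \<and> A k j \<noteq> {} \<and> A k j \<subseteq> W1 (z k j) (Dj fs j) \<and>
               u k j \<in> M k \<inter> cut (A k j) (z k j) \<and> f (u k j) \<le> fs0"
      using run unfolding method14_run_def Let_def J_def fs0_def by blast
    then show "?thesis k j" using \<open>j \<in> J k\<close> by blast
  qed
  have nle: "\<And>k j. j \<in> J k \<Longrightarrow> norm (x k - z k j) \<le> norm (x k - z k (jk k))"
    using run unfolding method14_run_def Let_def J_def by blast
  have lk: "\<And>k. lk k \<in> J k \<and> u k (lk k) \<in> M k \<inter> cut (A k (jk k)) (z k (jk k))"
    using run unfolding method14_run_def Let_def J_def by blast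
  have Msuc: "\<And>k. M (Suc k) = M k \<inter> cut (A k (jk k)) (z k (jk k)) \<inter> cut (A k (lk k)) (z k (lk k))"
    using run unfolding method14_run_def Let_def by blast
  have xsuc: "\<And>k. x (Suc k) = u k (lk k)"
    using run unfolding method14_run_def Let_def by blast
  have yint: "\<And>j. j\<in>{1..m} \<Longrightarrow> y j \<in> interior (Dj fs j)"
    using run unfolding method14_run_def by blast
  have q1: "q \<ge> 1" and fx0: "f (x 0) \<le> fs0"
    using run unfolding method14_run_def fs0_def by blast+
  have Mdec: "\<And>k k'. k \<le> k' \<Longrightarrow> M k' \<subseteq> M k"
    by (rule lift_Suc_antimono_le[of M]) (auto simp: Msuc)
  have xM: "\<And>k. x (Suc k) \<in> M (Suc k)"
    using lk zs by (simp add: Msuc xsuc)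
  have cutk: "\<And>k k'. k < k' \<Longrightarrow> x k' \<in> cut (A k (jk k)) (z k (jk k))"
  proof -
    fix k k' :: nat assume "k < k'"
    then obtain k'' where k'': "k' = Suc k''" "k \<le> k''" by (cases k') auto
    have "x k' \<in> M (Suc k)" using xM[of k''] Mdec[of "Suc k" "Suc k''"] k'' by auto
    then show "x k' \<in> cut (A k (jk k)) (z k (jk k))" by (simp add: Msuc)
  qed
  have fx: "\<And>k. f (x k) \<le> fs0"
  proof -
    fix k show "f (x k) \<le> fs0"
      using fx0 zs lk xsuc by (cases k) auto
  qed
  have m1: "{1..m} \<noteq> {}" using jkJ[of 0] by (auto simp: J_def)
  have "\<forall>j\<in>{1..m}. \<exists>e>0. cball (y j) e \<subseteq> Dj fs j"
    using yint by (simp add: mem_interior_cball)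
  then obtain e where e: "\<And>j. j\<in>{1..m} \<Longrightarrow> e j > 0 \<and> cball (y j) (e j) \<subseteq> Dj fs j"
    by metis
  define c where "c = Min (e ` {1..m})"
  have c0: "c > 0" unfolding c_def using e m1 by (subst Min_gr_iff) auto
  have cb: "\<And>j. j\<in>{1..m} \<Longrightarrow> cball (y j) c \<subseteq> Dj fs j"
  proof -
    fix j assume j: "j\<in>{1..m}"
    have ce: "c \<le> e j" unfolding c_def using j by (intro Min_le) auto
    show "cball (y j) c \<subseteq> Dj fs j" using subset_cball[OF ce, of "y j"] e[OF j] by blast
  qed
  obtain Bx where Bx: "\<And>k. norm (x k) \<le> Bx" using bdd by (meson bounded_iff rangeI)
  define B where "B = \<bar>Bx\<bar> + (\<Sum>j\<in>{1..m}. norm (y j)) + 1"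
  have B0: "B > 0" unfolding B_def by (smt (verit) sum_nonneg norm_ge_zero)
  have nB: "\<And>k j. j\<in>{1..m} \<Longrightarrow> norm (x k - y j) \<le> B"
  proof -
    fix k j assume j: "j\<in>{1..m}"
    have "norm (y j) \<le> (\<Sum>j\<in>{1..m}. norm (y j))"
      using j by (intro member_le_sum) auto
    then show "norm (x k - y j) \<le> B" unfolding B_def
      using Bx[of k] norm_triangle_ineq4[of "x k" "y j"] by linarith
  qed
  define d where "d = (\<lambda>k. norm (x k - z k (jk k)))"
  have main: "\<And>k k'. k < k' \<Longrightarrow> c / B * d k \<le> norm (x k' - x k)"
  proof -
    fix k k' :: nat assume kk: "k < k'"
    have j: "jk k \<in> J k" by (rule jkJ)
    then have j1: "jk k \<in> {1..m}" by (simp add: J_def)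
    from zs[OF j] obtain a where a: "a \<in> A k (jk k)" by blast
    with zs[OF j] have aW: "a \<in> W1 (z k (jk k)) (Dj fs (jk k))" by blast
    show "c / B * d k \<le> norm (x k' - x k)" unfolding d_def
    proof (rule key_ineq[where S = "Dj fs (jk k)" and a = a and yj = "y (jk k)"])
      show "z k (jk k) \<in> open_segment (y (jk k)) (x k)" using zs[OF j] by blast
      show "norm a = 1" "\<forall>w\<in>Dj fs (jk k). inner a (w - z k (jk k)) \<le> 0"
        using aW by (auto simp: W1_def)
      show "cball (y (jk k)) c \<subseteq> Dj fs (jk k)" using cb[OF j1] .
      show "c > 0" "B > 0" by (fact c0, fact B0)
      show "norm (x k - y (jk k)) \<le> B" using nB[OF j1] .
      show "inner a (x k' - z k (jk k)) \<le> 0" using cutk[OF kk] a by (auto simp: cut_def)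
    qed
  qed
  have "(\<lambda>i. x (r (Suc i)) - x (r i)) \<longlonglongrightarrow> p - p"
    using LIMSEQ_Suc[OF lim] lim by (intro tendsto_diff)
  then have "(\<lambda>i. norm (x (r (Suc i)) - x (r i))) \<longlonglongrightarrow> 0"
    using tendsto_norm_zero by fastforce
  then have g0: "(\<lambda>i. B / c * norm (x (r (Suc i)) - x (r i))) \<longlonglongrightarrow> 0"
    using tendsto_mult[OF tendsto_const[of "B / c"]] by fastforce
  have dlim: "(\<lambda>i. d (r i)) \<longlonglongrightarrow> 0"
  proof (rule Lim_null_comparison[OF _ g0], rule always_eventually, rule allI)
    fix i
    have "r i < r (Suc i)" using r by (simp add: strict_mono_def)
    then have h: "c / B * d (r i) \<le> norm (x (r (Suc i)) - x (r i))" by (rule main)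
    have "d (r i) = B / c * (c / B * d (r i))" using c0 B0 by simp
    also have "\<dots> \<le> B / c * norm (x (r (Suc i)) - x (r i))"
      using h c0 B0 by (intro mult_left_mono) auto
    finally show "norm (d (r i)) \<le> B / c * norm (x (r (Suc i)) - x (r i))"
      by (simp add: d_def)
  qed
  have pD: "p \<in> Dj fs j" if j: "j \<in> {1..m}" for j
  proof -
    have contj: "continuous_on UNIV (fs j)"
      by (rule convex_on_continuous[OF open_UNIV convex_fs[OF j]])
    have cl: "closed (Dj fs j)" unfolding Dj_def
      by (rule closed_Collect_le[OF contj continuous_on_const])
    define t where "t = (\<lambda>k. SOME t. 1 \<le> t \<and> t \<le> q \<and> x k + t *\<^sub>R (z k j - x k) \<in> Dj fs j)"
    define w where "w = (\<lambda>i. if x (r i) \<in> Dj fs j then x (r i)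
        else x (r i) + t (r i) *\<^sub>R (z (r i) j - x (r i)))"
    have tk: "1 \<le> t k \<and> t k \<le> q \<and> x k + t k *\<^sub>R (z k j - x k) \<in> Dj fs j"
      if "x k \<notin> Dj fs j" for k
    proof -
      have "j \<in> J k" using j that by (simp add: J_def)
      then have "\<exists>t. 1 \<le> t \<and> t \<le> q \<and> x k + t *\<^sub>R (z k j - x k) \<in> Dj fs j" using zs by blast
      then show ?thesis unfolding t_def by (rule someI_ex)
    qed
    have wD: "\<And>i. w i \<in> Dj fs j" unfolding w_def using tk by auto
    have wb: "norm (w i - x (r i)) \<le> q * d (r i)" for i
    proof (cases "x (r i) \<in> Dj fs j")
      case True
      then show ?thesis using q1 by (simp add: w_def d_def)
    next
      case False
      have "j \<in> J (r i)" using j False by (simp add: J_def)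
      then have n1: "norm (x (r i) - z (r i) j) \<le> d (r i)" using nle by (simp add: d_def)
      have t1: "1 \<le> t (r i)" "t (r i) \<le> q" using tk[OF False] by auto
      have "norm (w i - x (r i)) = t (r i) * norm (z (r i) j - x (r i))"
        using False t1 by (simp add: w_def)
      also have "\<dots> \<le> q * norm (x (r i) - z (r i) j)"
        using t1 by (simp add: norm_minus_commute mult_right_mono)
      also have "\<dots> \<le> q * d (r i)" using n1 q1 by (intro mult_left_mono) auto
      finally show ?thesis .
    qed
    have "(\<lambda>i. q * d (r i)) \<longlonglongrightarrow> 0"
      using tendsto_mult[OF tendsto_const[of q] dlim] by simp
    then have "(\<lambda>i. w i - x (r i)) \<longlonglongrightarrow> 0"
      by (rule Lim_null_comparison[rotated]) (use wb in auto)
    then have "(\<lambda>i. (w i - x (r i)) + x (r i)) \<longlonglongrightarrow> 0 + p"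
      using lim by (intro tendsto_add)
    then have "w \<longlonglongrightarrow> p" by simp
    then show ?thesis using closed_sequentially[OF cl, of w p] wD by blast
  qed
  have pDs: "p \<in> Dset m fs" using pD by (auto simp: Dset_def Dj_def)
  have "isCont f p" using cont_f by (simp add: continuous_on_eq_continuous_at)
  then have "(\<lambda>i. f (x (r i))) \<longlonglongrightarrow> f p" using lim by (rule isCont_tendsto_compose)
  then have fp1: "f p \<le> fs0" using fx by (intro LIMSEQ_le_const2) auto
  obtain x0 where x0: "x0 \<in> Dset m fs" "\<forall>x\<in>Dset m fs. f x0 \<le> f x" using attains by blast
  have "fs0 \<le> f p" unfolding fs0_def fstar_def
    using pDs x0 by (intro cInf_lower bdd_belowI2[where m = "f x0"]) auto
  with fp1 pDs show "p \<in> Xstar m fs f" by (simp add: Xstar_def fs0_def)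
qed

end
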